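(* Fix known constants $\sigma_f^2>0$, $\sigma_a^2\ge 0$ and $\alpha$ with $|\alpha|\le\sigma_f$, and consider the family of distributions indexed by the unknown parameter $\mu\in\mathbb{R}$ in which $(f(z),g(z))$ is jointly Gaussian with means $(\mu,0)$, variances $(\sigma_f^2,1)$ and covariance $\alpha$, and $Y(z)-f(z)\sim\mathcal{N}(0,\sigma_a^2)$ independent of $(f(z),g(z))$. Let $(y^{(i)},g(z^{(i)}))$, $i=1,\dots,n$, be i.i.d. observations of $(Y(z),g(z))$ from this model. Then $$\hat\mu_{\mathrm{cv}}=\frac{1}{n}\sum_{i=1}^n\bigl(y^{(i)}-\alpha\, g(z^{(i)})\bigr)$$ is the minimum variance unbiased estimator of $\mu$ (among all unbiased estimators of $\mu$ that are functions of $(y^{(i)},g(z^{(i)}))_{i=1}^n$).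
   Context: Here $z$ is a random input, $f(z)$ denotes the mean human judgment, $g(z)$ an automatic metric, and $Y(z)$ a noisy human judgment; only $\mu$ is an unknown parameter, all other quantities in the model being known constants. *)

theory Defs
  imports "HOL-Probability.Probability"
begin

definition std_normal :: "real measure" where
  "std_normal = density lborel std_normal_density"

text \<open>Law of one observation (Y(z), g(z)) in the model with parameter mu.
  Constructed from three independent standard normals Z1, Z2, Z3:
  g = Z1, f = mu + alpha Z1 + sqrt(sf^2 - alpha^2) Z2 (so (f,g) is jointly Gaussian
  with means (mu,0), variances (sf^2,1), covariance alpha), and Y = f + sa Z3
  with Y - f ~ N(0, sa^2) independent of (f,g).\<close>
definition obs_law :: "real \<Rightarrow> real \<Rightarrow> real \<Rightarrow> real \<Rightarrow> (real \<times> real) measure" where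
  "obs_law sf sa \<alpha> \<mu> =
     distr ((std_normal \<Otimes>\<^sub>M std_normal) \<Otimes>\<^sub>M std_normal) borel
       (\<lambda>((z1, z2), z3). (\<mu> + \<alpha> * z1 + sqrt (sf\<^sup>2 - \<alpha>\<^sup>2) * z2 + sa * z3, z1))"

definition sample_law :: "nat \<Rightarrow> real \<Rightarrow> real \<Rightarrow> real \<Rightarrow> real \<Rightarrow> (nat \<Rightarrow> real \<times> real) measure" where
  "sample_law n sf sa \<alpha> \<mu> = PiM {..<n} (\<lambda>_. obs_law sf sa \<alpha> \<mu>)"

definition mu_cv :: "nat \<Rightarrow> real \<Rightarrow> (nat \<Rightarrow> real \<times> real) \<Rightarrow> real" where
  "mu_cv n \<alpha> x = (\<Sum>i<n. fst (x i) - \<alpha> * snd (x i)) / real n"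

definition unbiased :: "nat \<Rightarrow> real \<Rightarrow> real \<Rightarrow> real \<Rightarrow> ((nat \<Rightarrow> real \<times> real) \<Rightarrow> real) \<Rightarrow> bool" where
  "unbiased n sf sa \<alpha> T \<longleftrightarrow>
     T \<in> borel_measurable (PiM {..<n} (\<lambda>_. (borel :: (real \<times> real) measure))) \<and>
     (\<forall>\<mu>. integrable (sample_law n sf sa \<alpha> \<mu>) T \<and>
          (\<integral>x. T x \<partial>sample_law n sf sa \<alpha> \<mu>) = \<mu>)"

text \<open>Variance of an unbiased estimator (possibly infinite), i.e. E[(T - mu)^2].\<close>
definition mse :: "nat \<Rightarrow> real \<Rightarrow> real \<Rightarrow> real \<Rightarrow> real \<Rightarrow> ((nat \<Rightarrow> real \<times> real) \<Rightarrow> real) \<Rightarrow> ennreal" where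
  "mse n sf sa \<alpha> \<mu> T = (\<integral>\<^sup>+x. ennreal ((T x - \<mu>)\<^sup>2) \<partial>sample_law n sf sa \<alpha> \<mu>)"

end

theory Submission
  imports Defs
begin

lemma prob_N: "prob_space std_normal"
  unfolding std_normal_def by (rule prob_space_normal_density) simp

lemma sets_N[measurable_cong, simp]: "sets std_normal = sets borel"
  unfolding std_normal_def by simp

lemma space_N[simp]: "space std_normal = UNIV"
  unfolding std_normal_def by simp

lemma shift_N:
  "density std_normal (\<lambda>z. ennreal (exp (a * z - a\<^sup>2 / 2))) = distr std_normal std_normal (\<lambda>z. z + a)"
proof (rule measure_eqI)
  show "sets (density std_normal (\<lambda>z. ennreal (exp (a * z - a\<^sup>2 / 2)))) = sets (distr std_normal std_normal (\<lambda>z. z + a))"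
    by simp
next
  fix A assume A: "A \<in> sets (density std_normal (\<lambda>z. ennreal (exp (a * z - a\<^sup>2 / 2))))"
  then have A': "A \<in> sets borel" by simp
  have eq: "\<And>x. std_normal_density x * exp (a * x - a\<^sup>2 / 2) = std_normal_density (x - a)"
    by (simp add: std_normal_density_def mult.assoc exp_add[symmetric] power2_eq_square algebra_simps)
  have "emeasure (density std_normal (\<lambda>z. ennreal (exp (a * z - a\<^sup>2 / 2)))) A
      = (\<integral>\<^sup>+x. ennreal (std_normal_density (x - a)) * indicator A x \<partial>lborel)"
    using A' unfolding std_normal_def
    apply (simp add: emeasure_density nn_integral_density)
    apply (rule nn_integral_cong)
    apply (simp add: eq[symmetric] ennreal_mult' mult.assoc)
    done
  also have "\<dots> = (\<integral>\<^sup>+x. ennreal (std_normal_density (a + 1 * x - a)) * indicator A (a + 1 * x) \<partial>lborel)"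
    using A' by (subst nn_integral_real_affine[where c=1 and t=a]) auto
  also have "\<dots> = emeasure (distr std_normal std_normal (\<lambda>z. z + a)) A"
  proof -
    have B: "(\<lambda>z. z + a) -` A \<in> sets borel" using measurable_sets[of "\<lambda>z. z + a" borel borel A] A' by simp
    show ?thesis
    using A' B unfolding std_normal_def
    by (simp add: emeasure_distr emeasure_density add.commute indicator_def)
  qed
  finally show "emeasure (density std_normal (\<lambda>z. ennreal (exp (a * z - a\<^sup>2 / 2)))) A = emeasure (distr std_normal std_normal (\<lambda>z. z + a)) A" .
qed

abbreviation "QQ \<equiv> (std_normal \<Otimes>\<^sub>M std_normal) \<Otimes>\<^sub>M std_normal"

lemma prob_QQ: "prob_space QQ"
  using prob_N by (intro prob_space_pair) auto

lemma ea_eq: "distr std_normal std_normal (\<lambda>z. z + a) = density std_normal (\<lambda>z. ennreal (exp (a * z - a\<^sup>2 / 2)))"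
  by (rule shift_N[symmetric])

lemma prob_shiftN: "prob_space (distr std_normal std_normal (\<lambda>z. z + a))"
  using prob_N by (intro prob_space.prob_space_distr) auto

lemma tilt_QQ:
  "density QQ (\<lambda>z. ennreal (exp (a * snd (fst z) - a\<^sup>2 / 2)) * ennreal (exp (b * snd z - b\<^sup>2 / 2)))
   = distr QQ QQ (\<lambda>z. ((fst (fst z), snd (fst z) + a), snd z + b))"
proof -
  interpret N: prob_space std_normal by (rule prob_N)
  have s1: "sigma_finite_measure (density std_normal (\<lambda>z. ennreal (exp (c * z - c\<^sup>2 / 2))))" for c
    using prob_shiftN[of c] unfolding ea_eq by (simp add: prob_space_imp_sigma_finite)
  have sN: "sigma_finite_measure (distr std_normal std_normal (\<lambda>z. z + c))" for c
    by (simp add: prob_shiftN prob_space_imp_sigma_finite)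
  have h1: "std_normal \<Otimes>\<^sub>M distr std_normal std_normal (\<lambda>z. z + a)
      = distr (std_normal \<Otimes>\<^sub>M std_normal) (std_normal \<Otimes>\<^sub>M std_normal) (\<lambda>(x, y). (x, y + a))"
    using pair_measure_distr[of "\<lambda>x. x" std_normal std_normal "\<lambda>z. z + a" std_normal std_normal] sN by simp
  have h2: "distr (std_normal \<Otimes>\<^sub>M std_normal) (std_normal \<Otimes>\<^sub>M std_normal) (\<lambda>(x, y). (x, y + a))
        \<Otimes>\<^sub>M distr std_normal std_normal (\<lambda>z. z + b)
      = distr QQ QQ (\<lambda>(p, z). ((\<lambda>(x, y). (x, y + a)) p, z + b))"
    by (rule pair_measure_distr) (auto simp: sN)
  have h3: "density std_normal (\<lambda>_. 1) \<Otimes>\<^sub>M density std_normal (\<lambda>z. ennreal (exp (a * z - a\<^sup>2 / 2)))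
     = density (std_normal \<Otimes>\<^sub>M std_normal) (\<lambda>(x,y). 1 * ennreal (exp (a * y - a\<^sup>2 / 2)))"
    by (rule pair_measure_density) (auto simp: s1 N.sigma_finite_measure_axioms)
  have h4: "density (std_normal \<Otimes>\<^sub>M std_normal) (\<lambda>(x,y). 1 * ennreal (exp (a * y - a\<^sup>2 / 2)))
       \<Otimes>\<^sub>M density std_normal (\<lambda>z. ennreal (exp (b * z - b\<^sup>2 / 2)))
     = density QQ (\<lambda>(p,z). (\<lambda>(x,y). 1 * ennreal (exp (a * y - a\<^sup>2 / 2))) p * ennreal (exp (b * z - b\<^sup>2 / 2)))"
    by (rule pair_measure_density) (auto simp: s1 N.sigma_finite_measure_axioms)
  have "distr QQ QQ (\<lambda>z. ((fst (fst z), snd (fst z) + a), snd z + b)) = distr QQ QQ (\<lambda>(p, z). ((\<lambda>(x, y). (x, y + a)) p, z + b))"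
    by (rule distr_cong) auto
  also have "\<dots> = (std_normal \<Otimes>\<^sub>M distr std_normal std_normal (\<lambda>z. z + a)) \<Otimes>\<^sub>M distr std_normal std_normal (\<lambda>z. z + b)"
    using h1 h2 by simp
  also have "\<dots> = (density std_normal (\<lambda>_. 1) \<Otimes>\<^sub>M density std_normal (\<lambda>z. ennreal (exp (a * z - a\<^sup>2 / 2))))
       \<Otimes>\<^sub>M density std_normal (\<lambda>z. ennreal (exp (b * z - b\<^sup>2 / 2)))"
    by (simp add: density_1 ea_eq)
  also have "\<dots> = density QQ (\<lambda>(p,z). (\<lambda>(x,y). 1 * ennreal (exp (a * y - a\<^sup>2 / 2))) p * ennreal (exp (b * z - b\<^sup>2 / 2)))"
    using h3 h4 by simp
  also have "\<dots> = density QQ (\<lambda>z. ennreal (exp (a * snd (fst z) - a\<^sup>2 / 2)) * ennreal (exp (b * snd z - b\<^sup>2 / 2)))"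
    apply (rule density_cong)
      apply measurable
    apply (auto split: prod.splits)
    done
  finally show ?thesis by simp
qed

definition FF :: "real \<Rightarrow> real \<Rightarrow> real \<Rightarrow> real \<Rightarrow> (real \<times> real) \<times> real \<Rightarrow> real \<times> real" where
  "FF sf sa \<alpha> \<mu> z = (\<mu> + \<alpha> * fst (fst z) + sqrt (sf\<^sup>2 - \<alpha>\<^sup>2) * snd (fst z) + sa * snd z, fst (fst z))"

lemma FF_meas[measurable]: "FF sf sa \<alpha> \<mu> \<in> borel_measurable QQ"
  unfolding FF_def by measurable

lemma obs_law_FF: "obs_law sf sa \<alpha> \<mu> = distr QQ borel (FF sf sa \<alpha> \<mu>)"
  unfolding obs_law_def FF_def by (rule distr_cong) (auto split: prod.splits)

definition lr :: "real \<Rightarrow> real \<Rightarrow> real \<Rightarrow> real \<Rightarrow> real \<times> real \<Rightarrow> real" where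
  "lr v \<alpha> \<mu> \<Delta> p = exp (\<Delta> * (fst p - \<alpha> * snd p - \<mu>) / v - \<Delta>\<^sup>2 / (2 * v))"

lemma lr_meas[measurable]: "lr v \<alpha> \<mu> \<Delta> \<in> borel_measurable borel"
  unfolding lr_def borel_prod[symmetric] by measurable

lemma obs_tilt:
  assumes "\<bar>\<alpha>\<bar> \<le> sf" and v: "v = sf\<^sup>2 - \<alpha>\<^sup>2 + sa\<^sup>2" "v > 0"
  shows "obs_law sf sa \<alpha> (\<mu> + \<Delta>) = density (obs_law sf sa \<alpha> \<mu>) (\<lambda>p. ennreal (lr v \<alpha> \<mu> \<Delta> p))"
proof -
  define s where "s = sqrt (sf\<^sup>2 - \<alpha>\<^sup>2)"
  have "\<alpha>\<^sup>2 \<le> sf\<^sup>2" using power_mono[OF assms(1), of 2] by simp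
  then have ss: "s\<^sup>2 = sf\<^sup>2 - \<alpha>\<^sup>2" unfolding s_def by simp
  define a where "a = \<Delta> * s / v"
  define b where "b = \<Delta> * sa / v"
  have sv: "s * s + sa * sa = v" using v ss by (simp add: power2_eq_square)
  have "s * a + sa * b = \<Delta> * (s * s + sa * sa) / v" unfolding a_def b_def using v
    by (simp add: field_simps)
  then have key1: "s * a + sa * b = \<Delta>" using sv v by simp
  have key2: "lr v \<alpha> \<mu> \<Delta> (FF sf sa \<alpha> \<mu> z) = exp (a * snd (fst z) - a\<^sup>2 / 2) * exp (b * snd z - b\<^sup>2 / 2)" for z
  proof -
    have "\<Delta> * (s * snd (fst z) + sa * snd z) / v - \<Delta>\<^sup>2 / (2 * v) = (a * snd (fst z) - a\<^sup>2 / 2) + (b * snd z - b\<^sup>2 / 2)"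
    proof -
      have e1: "a\<^sup>2 + b\<^sup>2 = \<Delta>\<^sup>2 * (s * s + sa * sa) / v\<^sup>2" unfolding a_def b_def
        by (simp add: power_divide power_mult_distrib power2_eq_square add_divide_distrib algebra_simps)
      have e2: "a\<^sup>2 + b\<^sup>2 = \<Delta>\<^sup>2 / v" unfolding e1 sv using v by (simp add: power2_eq_square)
      have "(a * snd (fst z) - a\<^sup>2 / 2) + (b * snd z - b\<^sup>2 / 2) = a * snd (fst z) + b * snd z - (a\<^sup>2 + b\<^sup>2) / 2"
        by (simp add: algebra_simps)
      also have "\<dots> = \<Delta> * (s * snd (fst z) + sa * snd z) / v - \<Delta>\<^sup>2 / (2 * v)"
        unfolding e2 using v(2) by (simp add: a_def b_def field_simps)
      finally show ?thesis by simp
    qed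
    then show ?thesis
      unfolding lr_def FF_def s_def[symmetric] by (simp add: exp_add[symmetric] algebra_simps)
  qed
  have "density (obs_law sf sa \<alpha> \<mu>) (\<lambda>p. ennreal (lr v \<alpha> \<mu> \<Delta> p))
      = distr (density QQ (\<lambda>z. ennreal (lr v \<alpha> \<mu> \<Delta> (FF sf sa \<alpha> \<mu> z)))) borel (FF sf sa \<alpha> \<mu>)"
    unfolding obs_law_FF by (rule density_distr) auto
  also have "density QQ (\<lambda>z. ennreal (lr v \<alpha> \<mu> \<Delta> (FF sf sa \<alpha> \<mu> z)))
     = density QQ (\<lambda>z. ennreal (exp (a * snd (fst z) - a\<^sup>2 / 2)) * ennreal (exp (b * snd z - b\<^sup>2 / 2)))"
    by (rule density_cong) (auto simp: key2 ennreal_mult)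
  also have "\<dots> = distr QQ QQ (\<lambda>z. ((fst (fst z), snd (fst z) + a), snd z + b))"
    by (rule tilt_QQ)
  also have "distr (distr QQ QQ (\<lambda>z. ((fst (fst z), snd (fst z) + a), snd z + b))) borel (FF sf sa \<alpha> \<mu>)
     = distr QQ borel (\<lambda>z. FF sf sa \<alpha> \<mu> ((fst (fst z), snd (fst z) + a), snd z + b))"
    apply (subst distr_distr)
      apply measurable
    apply (simp add: comp_def)
    done
  also have "\<dots> = distr QQ borel (FF sf sa \<alpha> (\<mu> + \<Delta>))"
    apply (rule distr_cong)
    using key1 unfolding FF_def s_def[symmetric] by (auto simp: algebra_simps)
  finally show ?thesis by (simp add: obs_law_FF)
qed


lemma PiM_density_prob:
  fixes M :: "'a measure" and h :: "'a \<Rightarrow> ennreal"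
  assumes I: "finite I" and M: "prob_space M" and h[measurable]: "h \<in> borel_measurable M"
    and D: "prob_space (density M h)"
  shows "PiM I (\<lambda>_. density M h) = density (PiM I (\<lambda>_. M)) (\<lambda>x. \<Prod>i\<in>I. h (x i))"
proof -
  interpret DP: product_prob_space "\<lambda>_. density M h" I
    using product_prob_spaceI[of "\<lambda>_. density M h"] D by simp
  interpret MP: product_prob_space "\<lambda>_. M" I
    using product_prob_spaceI[of "\<lambda>_. M"] M by simp
  show ?thesis
  proof (rule DP.PiM_eqI[symmetric])
    show "finite I" by fact
    show "sets (density (PiM I (\<lambda>_. M)) (\<lambda>x. \<Prod>i\<in>I. h (x i))) = sets (PiM I (\<lambda>_. density M h))"
      unfolding sets_density by (rule sets_PiM_cong) simp_all
  next
    fix A assume A: "\<And>i. i \<in> I \<Longrightarrow> A i \<in> sets (density M h)"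
    then have A': "\<And>i. i \<in> I \<Longrightarrow> A i \<in> sets M" by simp
    have PA: "Pi\<^sub>E I A \<in> sets (PiM I (\<lambda>_. M))"
      using A' by (simp add: sets_PiM_I_finite I)
    have "emeasure (density (PiM I (\<lambda>_. M)) (\<lambda>x. \<Prod>i\<in>I. h (x i))) (Pi\<^sub>E I A)
        = (\<integral>\<^sup>+x. (\<Prod>i\<in>I. h (x i)) * indicator (Pi\<^sub>E I A) x \<partial>PiM I (\<lambda>_. M))"
      using PA by (simp add: emeasure_density)
    also have "\<dots> = (\<integral>\<^sup>+x. (\<Prod>i\<in>I. h (x i) * indicator (A i) (x i)) \<partial>PiM I (\<lambda>_. M))"
    proof (rule nn_integral_cong)
      fix x assume "x \<in> space (PiM I (\<lambda>_. M))"
      then have ext: "x \<in> extensional I" by (simp add: space_PiM PiE_def)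
      have "indicator (Pi\<^sub>E I A) x = (\<Prod>i\<in>I. indicator (A i) (x i) :: ennreal)"
      proof (cases "x \<in> Pi\<^sub>E I A")
        case True
        then have "(\<Prod>i\<in>I. indicator (A i) (x i) :: ennreal) = 1"
          by (intro prod.neutral) (auto simp: PiE_def Pi_def)
        then show ?thesis using True by simp
      next
        case False
        then obtain i where "i \<in> I" "x i \<notin> A i" using ext by (auto simp: PiE_def)
        then have "(\<Prod>i\<in>I. indicator (A i) (x i) :: ennreal) = 0"
          using I by (intro prod_zero) (auto intro!: bexI[of _ i])
        then show ?thesis using False by simp
      qed
      then show "(\<Prod>i\<in>I. h (x i)) * indicator (Pi\<^sub>E I A) x = (\<Prod>i\<in>I. h (x i) * indicator (A i) (x i))"
        by (simp add: prod.distrib)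
    qed
    also have "\<dots> = (\<Prod>i\<in>I. \<integral>\<^sup>+y. h y * indicator (A i) y \<partial>M)"
      using A' by (intro MP.product_nn_integral_prod I) auto
    also have "\<dots> = (\<Prod>i\<in>I. emeasure (density M h) (A i))"
      using A' by (intro prod.cong refl) (simp add: emeasure_density)
    finally show "emeasure (density (PiM I (\<lambda>_. M)) (\<lambda>x. \<Prod>i\<in>I. h (x i))) (Pi\<^sub>E I A) = (\<Prod>i\<in>I. emeasure (density M h) (A i))" .
  qed
qed


lemma pair_prod_int:
  fixes f g :: "_ \<Rightarrow> real"
  assumes PM1: "prob_space M1" and PM2: "prob_space M2" and f: "integrable M1 f" and g: "integrable M2 g"
  shows "integrable (M1 \<Otimes>\<^sub>M M2) (\<lambda>z. f (fst z) * g (snd z))"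
    and "(\<integral>z. f (fst z) * g (snd z) \<partial>(M1 \<Otimes>\<^sub>M M2)) = integral\<^sup>L M1 f * integral\<^sup>L M2 g"
proof -
  interpret P1: prob_space M1 by fact
  interpret P2: prob_space M2 by fact
  interpret P: pair_sigma_finite M1 M2
    by (simp add: pair_sigma_finite_def P1.sigma_finite_measure_axioms P2.sigma_finite_measure_axioms)
  have [measurable]: "f \<in> borel_measurable M1" "g \<in> borel_measurable M2"
    using f g by auto
  have "(\<integral>\<^sup>+z. ennreal (norm (f (fst z) * g (snd z))) \<partial>(M1 \<Otimes>\<^sub>M M2))
      = (\<integral>\<^sup>+x. \<integral>\<^sup>+y. ennreal (norm (f (fst (x,y)) * g (snd (x,y)))) \<partial>M2 \<partial>M1)"
    by (rule P2.nn_integral_fst[symmetric]) measurable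
  also have "\<dots> = (\<integral>\<^sup>+x. ennreal (norm (f x)) * (\<integral>\<^sup>+y. ennreal (norm (g y)) \<partial>M2) \<partial>M1)"
    by (simp add: abs_mult ennreal_mult nn_integral_cmult)
  also have "\<dots> = (\<integral>\<^sup>+x. ennreal (norm (f x)) \<partial>M1) * (\<integral>\<^sup>+y. ennreal (norm (g y)) \<partial>M2)"
    by (simp add: nn_integral_multc)
  also have "\<dots> < \<infinity>"
  proof -
    have A: "(\<integral>\<^sup>+x. ennreal (norm (f x)) \<partial>M1) < \<infinity>" using f by (simp add: integrable_iff_bounded)
    have B: "(\<integral>\<^sup>+x. ennreal (norm (g x)) \<partial>M2) < \<infinity>" using g by (simp add: integrable_iff_bounded)
    show ?thesis using A B by (simp add: ennreal_mult_less_top)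
  qed
  finally show int: "integrable (M1 \<Otimes>\<^sub>M M2) (\<lambda>z. f (fst z) * g (snd z))"
    by (intro integrableI_bounded) measurable
  have "(\<integral>z. f (fst z) * g (snd z) \<partial>(M1 \<Otimes>\<^sub>M M2)) = (\<integral>x. (\<integral>y. f (fst (x,y)) * g (snd (x,y)) \<partial>M2) \<partial>M1)"
    by (rule P.integral_fst'[symmetric]) (rule int)
  also have "\<dots> = integral\<^sup>L M1 f * integral\<^sup>L M2 g"
    by simp
  finally show "(\<integral>z. f (fst z) * g (snd z) \<partial>(M1 \<Otimes>\<^sub>M M2)) = integral\<^sup>L M1 f * integral\<^sup>L M2 g" .
qed

lemma N_mom:
  "integrable std_normal (\<lambda>z. z)" "integral\<^sup>L std_normal (\<lambda>z. z) = 0"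
  "integrable std_normal (\<lambda>z. z\<^sup>2)" "integral\<^sup>L std_normal (\<lambda>z. z\<^sup>2) = 1"
  "integrable std_normal (\<lambda>z. 1::real)" "integral\<^sup>L std_normal (\<lambda>z. 1::real) = 1"
proof -
  interpret prob_space std_normal by (rule prob_N)
  have i1: "integrable lborel (\<lambda>x. std_normal_density x * x ^ 1)" by (rule integrable_std_normal_moment)
  have i2: "integrable lborel (\<lambda>x. std_normal_density x * x ^ 2)" by (rule integrable_std_normal_moment)
  have m1: "integral\<^sup>L lborel (\<lambda>x. std_normal_density x * x ^ (2 * 0 + 1)) = 0"
    by (rule integral_std_normal_moment_odd)
  have m2: "integral\<^sup>L lborel (\<lambda>x. std_normal_density x * x ^ (2 * 1)) = fact (2 * 1) / (2^1 * fact 1)"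
    by (rule integral_std_normal_moment_even)
  show "integrable std_normal (\<lambda>z. z)" unfolding std_normal_def
    using i1 by (subst integrable_density) auto
  show "integrable std_normal (\<lambda>z. z\<^sup>2)" unfolding std_normal_def
    using i2 by (subst integrable_density) auto
  show "integral\<^sup>L std_normal (\<lambda>z. z) = 0" unfolding std_normal_def
    using m1 by (subst integral_density) auto
  show "integral\<^sup>L std_normal (\<lambda>z. z\<^sup>2) = 1" unfolding std_normal_def
    using m2 by (subst integral_density) (auto simp: fact_numeral)
  show "integrable std_normal (\<lambda>z. 1::real)" by simp
  show "integral\<^sup>L std_normal (\<lambda>z. 1::real) = 1" using prob_space by simp
qed


lemma QQ_mom:
  fixes s sa :: real
  shows "integrable QQ (\<lambda>z. s * snd (fst z) + sa * snd z)"
    "integral\<^sup>L QQ (\<lambda>z. s * snd (fst z) + sa * snd z) = 0"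
    "integrable QQ (\<lambda>z. (s * snd (fst z) + sa * snd z)\<^sup>2)"
    "integral\<^sup>L QQ (\<lambda>z. (s * snd (fst z) + sa * snd z)\<^sup>2) = s\<^sup>2 + sa\<^sup>2"
proof -
  have PN: "prob_space std_normal" by (rule prob_N)
  have PNN: "prob_space (std_normal \<Otimes>\<^sub>M std_normal)" using PN by (intro prob_space_pair)
  note NM = N_mom
  note A = pair_prod_int[OF PN PN NM(5) NM(1)]
  have p1: "integrable (std_normal \<Otimes>\<^sub>M std_normal) (\<lambda>p. snd p)" "integral\<^sup>L (std_normal \<Otimes>\<^sub>M std_normal) (\<lambda>p. snd p) = 0"
    using A NM by simp_all
  note B = pair_prod_int[OF PN PN NM(5) NM(3)]
  have p2: "integrable (std_normal \<Otimes>\<^sub>M std_normal) (\<lambda>p. (snd p)\<^sup>2)" "integral\<^sup>L (std_normal \<Otimes>\<^sub>M std_normal) (\<lambda>p. (snd p)\<^sup>2) = 1"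
    using B NM by simp_all
  note C1 = pair_prod_int[OF PNN PN p1(1) NM(5)]
  have q2: "integrable QQ (\<lambda>z. snd (fst z))" "integral\<^sup>L QQ (\<lambda>z. snd (fst z)) = 0"
    using C1 p1 NM by simp_all
  interpret PNN: prob_space "std_normal \<Otimes>\<^sub>M std_normal" by (rule PNN)
  have c1: "integrable (std_normal \<Otimes>\<^sub>M std_normal) (\<lambda>_. 1::real)" by simp
  note C2 = pair_prod_int[OF PNN PN c1 NM(1)]
  have q3: "integrable QQ (\<lambda>z. snd z)" "integral\<^sup>L QQ (\<lambda>z. snd z) = 0"
    using C2 NM prob_space.prob_space[OF PNN] by simp_all
  note C3 = pair_prod_int[OF PNN PN p2(1) NM(5)]
  have q22: "integrable QQ (\<lambda>z. (snd (fst z))\<^sup>2)" "integral\<^sup>L QQ (\<lambda>z. (snd (fst z))\<^sup>2) = 1"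
    using C3 p2 NM by simp_all
  note C4 = pair_prod_int[OF PNN PN c1 NM(3)]
  have q33: "integrable QQ (\<lambda>z. (snd z)\<^sup>2)" "integral\<^sup>L QQ (\<lambda>z. (snd z)\<^sup>2) = 1"
    using C4 NM prob_space.prob_space[OF PNN] by simp_all
  note C5 = pair_prod_int[OF PNN PN p1(1) NM(1)]
  have q23: "integrable QQ (\<lambda>z. snd (fst z) * snd z)" "integral\<^sup>L QQ (\<lambda>z. snd (fst z) * snd z) = 0"
    using C5 p1 NM by simp_all
  show "integrable QQ (\<lambda>z. s * snd (fst z) + sa * snd z)"
    using q2 q3 by auto
  show "integral\<^sup>L QQ (\<lambda>z. s * snd (fst z) + sa * snd z) = 0"
    using q2 q3 by (simp add: integral_add)
  have eq: "(\<lambda>z. (s * snd (fst z) + sa * snd z)\<^sup>2) = (\<lambda>z. s\<^sup>2 * (snd (fst z))\<^sup>2 + (2 * s * sa) * (snd (fst z) * snd z) + sa\<^sup>2 * (snd z)\<^sup>2)"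
    by (auto simp: power2_eq_square algebra_simps)
  show "integrable QQ (\<lambda>z. (s * snd (fst z) + sa * snd z)\<^sup>2)"
    unfolding eq using q22 q23 q33 by auto
  show "integral\<^sup>L QQ (\<lambda>z. (s * snd (fst z) + sa * snd z)\<^sup>2) = s\<^sup>2 + sa\<^sup>2"
    unfolding eq using q22 q23 q33 by (simp add: integral_add)
qed


lemma hcr:
  fixes P :: "'a measure" and T La Lb :: "'a \<Rightarrow> real"
  assumes PS: "prob_space P"
    and [measurable]: "T \<in> borel_measurable P" "La \<in> borel_measurable P" "Lb \<in> borel_measurable P"
    and nn1: "\<And>x. 0 \<le> La x" and nn2: "\<And>x. 0 \<le> Lb x"
    and iT: "integrable P T" and eT: "integral\<^sup>L P T = \<mu>"
    and iT1: "integrable (density P La) T" and eT1: "integral\<^sup>L (density P La) T = \<mu> + \<Delta>"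
    and P1: "prob_space (density P La)" and P2: "prob_space (density P Lb)"
    and sq: "\<And>x. x \<in> space P \<Longrightarrow> (La x)\<^sup>2 = E * Lb x" and E: "E > 1"
    and iX: "integrable P (\<lambda>x. (T x - \<mu>)\<^sup>2)"
  shows "\<Delta>\<^sup>2 / (E - 1) \<le> integral\<^sup>L P (\<lambda>x. (T x - \<mu>)\<^sup>2)"
proof -
  interpret prob_space P by (rule PS)
  interpret D1: prob_space "density P La" by (rule P1)
  interpret D2: prob_space "density P Lb" by (rule P2)
  define A where "A = integral\<^sup>L P (\<lambda>x. (T x - \<mu>)\<^sup>2)"
  have hc: "has_bochner_integral P (\<lambda>x. 1) (1::real)"
    using prob_space by (simp add: has_bochner_integral_iff)
  have hmu: "has_bochner_integral P (\<lambda>x. \<mu>) \<mu>"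
    using prob_space by (simp add: has_bochner_integral_iff)
  have "integrable (density P La) (\<lambda>x. 1::real)" by simp
  then have iLa: "integrable P La" by (subst (asm) integrable_density) (auto simp: nn1)
  have "integral\<^sup>L (density P La) (\<lambda>x. 1::real) = 1" using D1.prob_space by simp
  then have "integral\<^sup>L P La = 1" by (subst (asm) integral_density) (auto simp: nn1)
  with iLa have hLa: "has_bochner_integral P La 1" by (simp add: has_bochner_integral_iff)
  have "integrable (density P Lb) (\<lambda>x. 1::real)" by simp
  then have iLb: "integrable P Lb" by (subst (asm) integrable_density) (auto simp: nn2)
  have "integral\<^sup>L (density P Lb) (\<lambda>x. 1::real) = 1" using D2.prob_space by simp
  then have "integral\<^sup>L P Lb = 1" by (subst (asm) integral_density) (auto simp: nn2)
  with iLb have hLb: "has_bochner_integral P Lb 1" by (simp add: has_bochner_integral_iff)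
  have iLT: "integrable P (\<lambda>x. La x * T x)" using iT1 by (subst (asm) integrable_density) (auto simp: nn1)
  have "integral\<^sup>L P (\<lambda>x. La x * T x) = \<mu> + \<Delta>" using eT1 by (subst (asm) integral_density) (auto simp: nn1)
  with iLT have hLT: "has_bochner_integral P (\<lambda>x. La x * T x) (\<mu> + \<Delta>)" by (simp add: has_bochner_integral_iff)
  have hT: "has_bochner_integral P T \<mu>" using iT eT by (simp add: has_bochner_integral_iff)
  have hX: "has_bochner_integral P (\<lambda>x. (T x - \<mu>)\<^sup>2) A" using iX A_def by (simp add: has_bochner_integral_iff)
  define k where "k = \<Delta> / (E - 1)"
  have hG: "has_bochner_integral P
     (\<lambda>x. (T x - \<mu>)\<^sup>2 - 2 * k * (La x * T x - T x - \<mu> * La x + \<mu>) + k\<^sup>2 * (E * Lb x - 2 * La x + 1))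
     (A - 2 * k * ((\<mu> + \<Delta>) - \<mu> - \<mu> * 1 + \<mu>) + k\<^sup>2 * (E * 1 - 2 * 1 + 1))"
    by (intro has_bochner_integral_add has_bochner_integral_diff has_bochner_integral_mult_right hc hmu hLa hLb hLT hT hX)
  have "0 \<le> integral\<^sup>L P (\<lambda>x. (T x - \<mu> - k * (La x - 1))\<^sup>2)"
    by (rule integral_nonneg_AE) auto
  also have "integral\<^sup>L P (\<lambda>x. (T x - \<mu> - k * (La x - 1))\<^sup>2)
     = integral\<^sup>L P (\<lambda>x. (T x - \<mu>)\<^sup>2 - 2 * k * (La x * T x - T x - \<mu> * La x + \<mu>) + k\<^sup>2 * (E * Lb x - 2 * La x + 1))"
  proof (rule Bochner_Integration.integral_cong[OF refl])
    fix x assume x: "x \<in> space P"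
    have "(T x - \<mu> - k * (La x - 1))\<^sup>2 = (T x - \<mu>)\<^sup>2 - 2 * k * (La x * T x - T x - \<mu> * La x + \<mu>) + k\<^sup>2 * ((La x)\<^sup>2 - 2 * La x + 1)"
      by (simp add: power2_eq_square algebra_simps)
    then show "(T x - \<mu> - k * (La x - 1))\<^sup>2 = (T x - \<mu>)\<^sup>2 - 2 * k * (La x * T x - T x - \<mu> * La x + \<mu>) + k\<^sup>2 * (E * Lb x - 2 * La x + 1)"
      using sq[OF x] by simp
  qed
  also have "\<dots> = A - 2 * k * \<Delta> + k\<^sup>2 * (E - 1)"
    using hG by (simp add: has_bochner_integral_iff)
  also have "\<dots> = A - \<Delta>\<^sup>2 / (E - 1)"
  proof -
    have ke: "k * (E - 1) = \<Delta>" using E unfolding k_def by simp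
    have "k\<^sup>2 * (E - 1) = k * \<Delta>" using ke by (simp add: power2_eq_square algebra_simps)
    moreover have "k * \<Delta> = \<Delta>\<^sup>2 / (E - 1)" unfolding k_def by (simp add: power2_eq_square)
    ultimately show ?thesis by simp
  qed
  finally show ?thesis unfolding A_def by simp
qed


definition wfun :: "real \<Rightarrow> real \<Rightarrow> real \<times> real \<Rightarrow> real" where
  "wfun \<alpha> \<mu> p = fst p - \<alpha> * snd p - \<mu>"

lemma wfun_meas[measurable]: "wfun \<alpha> \<mu> \<in> borel_measurable borel"
  unfolding wfun_def borel_prod[symmetric] by measurable

lemma obs_prob: "prob_space (obs_law sf sa \<alpha> \<mu>)"
  unfolding obs_law_FF by (rule prob_space.prob_space_distr[OF prob_QQ]) simp

lemma obs_mom: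
  assumes "\<bar>\<alpha>\<bar> \<le> sf"
  shows "integrable (obs_law sf sa \<alpha> \<mu>) (wfun \<alpha> \<mu>)"
    "integral\<^sup>L (obs_law sf sa \<alpha> \<mu>) (wfun \<alpha> \<mu>) = 0"
    "integrable (obs_law sf sa \<alpha> \<mu>) (\<lambda>p. (wfun \<alpha> \<mu> p)\<^sup>2)"
    "integral\<^sup>L (obs_law sf sa \<alpha> \<mu>) (\<lambda>p. (wfun \<alpha> \<mu> p)\<^sup>2) = sf\<^sup>2 - \<alpha>\<^sup>2 + sa\<^sup>2"
proof -
  define s where "s = sqrt (sf\<^sup>2 - \<alpha>\<^sup>2)"
  have "\<alpha>\<^sup>2 \<le> sf\<^sup>2" using power_mono[OF assms(1), of 2] by simp
  then have ss: "s\<^sup>2 = sf\<^sup>2 - \<alpha>\<^sup>2" unfolding s_def by simp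
  have eq: "wfun \<alpha> \<mu> (FF sf sa \<alpha> \<mu> z) = s * snd (fst z) + sa * snd z" for z
    unfolding wfun_def FF_def s_def by simp
  note M = QQ_mom[of s sa]
  show "integrable (obs_law sf sa \<alpha> \<mu>) (wfun \<alpha> \<mu>)"
    unfolding obs_law_FF by (subst integrable_distr_eq) (auto simp: eq M)
  show "integral\<^sup>L (obs_law sf sa \<alpha> \<mu>) (wfun \<alpha> \<mu>) = 0"
    unfolding obs_law_FF by (subst integral_distr) (auto simp: eq M)
  show "integrable (obs_law sf sa \<alpha> \<mu>) (\<lambda>p. (wfun \<alpha> \<mu> p)\<^sup>2)"
    unfolding obs_law_FF by (subst integrable_distr_eq) (auto simp: eq M)
  show "integral\<^sup>L (obs_law sf sa \<alpha> \<mu>) (\<lambda>p. (wfun \<alpha> \<mu> p)\<^sup>2) = sf\<^sup>2 - \<alpha>\<^sup>2 + sa\<^sup>2"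
    unfolding obs_law_FF by (subst integral_distr) (auto simp: eq M ss)
qed

lemma sample_cross:
  assumes a: "\<bar>\<alpha>\<bar> \<le> sf" and ij: "i < n" "j < n"
  shows "integrable (sample_law n sf sa \<alpha> \<mu>) (\<lambda>x. wfun \<alpha> \<mu> (x i) * wfun \<alpha> \<mu> (x j))"
    "integral\<^sup>L (sample_law n sf sa \<alpha> \<mu>) (\<lambda>x. wfun \<alpha> \<mu> (x i) * wfun \<alpha> \<mu> (x j))
       = (if i = j then sf\<^sup>2 - \<alpha>\<^sup>2 + sa\<^sup>2 else 0)"
proof -
  let ?O = "obs_law sf sa \<alpha> \<mu>"
  let ?w = "wfun \<alpha> \<mu>"
  interpret PP: product_prob_space "\<lambda>_. ?O" "{..<n}"
    using product_prob_spaceI[of "\<lambda>_. ?O"] obs_prob by simp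
  interpret O: prob_space ?O by (rule obs_prob)
  note M = obs_mom[OF a, where \<mu>=\<mu> and sa=sa]
  define f where "f k = (if k = i \<and> k = j then (\<lambda>p. (?w p)\<^sup>2) else if k = i \<or> k = j then ?w else (\<lambda>_. 1))" for k
  have fint: "integrable ?O (f k)" for k
    unfolding f_def using M by auto
  have fval: "integral\<^sup>L ?O (f k) = (if k = i \<and> k = j then sf\<^sup>2 - \<alpha>\<^sup>2 + sa\<^sup>2 else if k = i \<or> k = j then 0 else 1)" for k
    unfolding f_def using M prob_space.prob_space[OF obs_prob] by auto
  have fprod: "(\<Prod>k\<in>{..<n}. f k (x k)) = ?w (x i) * ?w (x j)" for x
  proof -
    have "(\<Prod>k\<in>{..<n}. f k (x k)) = (\<Prod>k\<in>{..<n}. (if k = i then ?w (x k) else 1) * (if k = j then ?w (x k) else 1))"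
      unfolding f_def by (intro prod.cong refl) (auto simp: power2_eq_square)
    also have "\<dots> = (\<Prod>k\<in>{..<n}. (if k = i then ?w (x k) else 1)) * (\<Prod>k\<in>{..<n}. (if k = j then ?w (x k) else 1))"
      by (rule prod.distrib)
    also have "\<dots> = ?w (x i) * ?w (x j)"
      using ij by (simp add: prod.delta)
    finally show ?thesis .
  qed
  show "integrable (sample_law n sf sa \<alpha> \<mu>) (\<lambda>x. ?w (x i) * ?w (x j))"
    using PP.product_integrable_prod[of "{..<n}" f] fint unfolding sample_law_def fprod by simp
  have "integral\<^sup>L (sample_law n sf sa \<alpha> \<mu>) (\<lambda>x. ?w (x i) * ?w (x j)) = (\<Prod>k\<in>{..<n}. integral\<^sup>L ?O (f k))"
    using PP.product_integral_prod[of "{..<n}" f] fint unfolding sample_law_def fprod by simp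
  also have "\<dots> = (if i = j then sf\<^sup>2 - \<alpha>\<^sup>2 + sa\<^sup>2 else 0)"
  proof (cases "i = j")
    case True
    then have "(\<Prod>k\<in>{..<n}. integral\<^sup>L ?O (f k)) = (\<Prod>k\<in>{..<n}. if k = j then sf\<^sup>2 - \<alpha>\<^sup>2 + sa\<^sup>2 else 1)"
      by (intro prod.cong refl) (auto simp: fval)
    then show ?thesis using ij True by (simp add: prod.delta)
  next
    case False
    have iI: "i \<in> {..<n}" using ij by simp
    have "(\<Prod>k\<in>{..<n}. integral\<^sup>L ?O (f k)) = 0"
      by (rule prod_zero) (use iI False in \<open>auto simp: fval\<close>)
    then show ?thesis using False by simp
  qed
  finally show "integral\<^sup>L (sample_law n sf sa \<alpha> \<mu>) (\<lambda>x. ?w (x i) * ?w (x j))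
       = (if i = j then sf\<^sup>2 - \<alpha>\<^sup>2 + sa\<^sup>2 else 0)" .
qed

lemma mu_cv_eq:
  assumes "n \<ge> 1"
  shows "mu_cv n \<alpha> x = \<mu> + (\<Sum>i<n. wfun \<alpha> \<mu> (x i)) / real n"
proof -
  have "(\<Sum>i<n. wfun \<alpha> \<mu> (x i)) = (\<Sum>i<n. fst (x i) - \<alpha> * snd (x i)) - real n * \<mu>"
    unfolding wfun_def by (simp add: sum_subtractf)
  then show ?thesis using assms unfolding mu_cv_def by (simp add: field_simps)
qed

lemma mu_cv_meas: "mu_cv n \<alpha> \<in> borel_measurable (PiM {..<n} (\<lambda>_. (borel :: (real \<times> real) measure)))"
proof -
  have hf: "(\<lambda>p::real \<times> real. fst p - \<alpha> * snd p) \<in> borel_measurable borel"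
    unfolding borel_prod[symmetric] by measurable
  have c: "(\<lambda>x. fst (x i) - \<alpha> * snd (x i)) \<in> borel_measurable (PiM {..<n} (\<lambda>_. (borel :: (real \<times> real) measure)))"
    if "i \<in> {..<n}" for i
    using measurable_compose[OF measurable_component_singleton[OF that] hf] by simp
  show ?thesis unfolding mu_cv_def
    by (intro borel_measurable_divide borel_measurable_sum c) simp_all
qed

lemma sample_single:
  assumes a: "\<bar>\<alpha>\<bar> \<le> sf" and i: "i < n"
  shows "integrable (sample_law n sf sa \<alpha> \<mu>) (\<lambda>x. wfun \<alpha> \<mu> (x i))"
    "integral\<^sup>L (sample_law n sf sa \<alpha> \<mu>) (\<lambda>x. wfun \<alpha> \<mu> (x i)) = 0"
proof -
  let ?O = "obs_law sf sa \<alpha> \<mu>"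
  interpret PP: product_prob_space "\<lambda>_. ?O" "{..<n}"
    using product_prob_spaceI[of "\<lambda>_. ?O"] obs_prob by simp
  note M = obs_mom[OF a, where \<mu>=\<mu> and sa=sa]
  have D: "distr (sample_law n sf sa \<alpha> \<mu>) ?O (\<lambda>x. x i) = ?O"
    unfolding sample_law_def using i by (intro PP.PiM_component) simp
  have mi: "(\<lambda>x. x i) \<in> measurable (sample_law n sf sa \<alpha> \<mu>) ?O"
    unfolding sample_law_def using i by (intro measurable_component_singleton) simp
  show "integrable (sample_law n sf sa \<alpha> \<mu>) (\<lambda>x. wfun \<alpha> \<mu> (x i))"
    using integrable_distr_eq[OF mi, of "wfun \<alpha> \<mu>"] M D by simp
  show "integral\<^sup>L (sample_law n sf sa \<alpha> \<mu>) (\<lambda>x. wfun \<alpha> \<mu> (x i)) = 0"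
    using integral_distr[OF mi, of "wfun \<alpha> \<mu>"] M D by simp
qed

lemma cv_stats:
  assumes a: "\<bar>\<alpha>\<bar> \<le> sf" and n: "n \<ge> 1"
  shows "unbiased n sf sa \<alpha> (mu_cv n \<alpha>)"
    "mse n sf sa \<alpha> \<mu> (mu_cv n \<alpha>) = ennreal ((sf\<^sup>2 - \<alpha>\<^sup>2 + sa\<^sup>2) / real n)"
proof -
  show "unbiased n sf sa \<alpha> (mu_cv n \<alpha>)"
    unfolding unbiased_def
  proof (intro conjI allI mu_cv_meas)
    fix \<mu>
    have eq: "mu_cv n \<alpha> = (\<lambda>x. \<mu> + (\<Sum>i<n. wfun \<alpha> \<mu> (x i)) / real n)"
      using mu_cv_eq[OF n] by auto
    interpret P: prob_space "sample_law n sf sa \<alpha> \<mu>"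
      unfolding sample_law_def by (intro prob_space_PiM obs_prob)
    note S = sample_single[OF a, where \<mu>=\<mu> and sa=sa and n=n]
    show "integrable (sample_law n sf sa \<alpha> \<mu>) (mu_cv n \<alpha>)"
    proof -
      have i0: "integrable (sample_law n sf sa \<alpha> \<mu>) (\<lambda>x. \<Sum>i<n. wfun \<alpha> \<mu> (x i))"
        by (rule Bochner_Integration.integrable_sum) (simp add: S)
      then show ?thesis unfolding eq by simp
    qed
    show "integral\<^sup>L (sample_law n sf sa \<alpha> \<mu>) (mu_cv n \<alpha>) = \<mu>"
    proof -
      have i1: "integrable (sample_law n sf sa \<alpha> \<mu>) (\<lambda>x. (\<Sum>i<n. wfun \<alpha> \<mu> (x i)) / real n)"
      proof -
        have i0: "integrable (sample_law n sf sa \<alpha> \<mu>) (\<lambda>x. \<Sum>i<n. wfun \<alpha> \<mu> (x i))"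
          by (rule Bochner_Integration.integrable_sum) (simp add: S)
        then show ?thesis by simp
      qed
      have "integral\<^sup>L (sample_law n sf sa \<alpha> \<mu>) (\<lambda>x. \<mu> + (\<Sum>i<n. wfun \<alpha> \<mu> (x i)) / real n)
          = integral\<^sup>L (sample_law n sf sa \<alpha> \<mu>) (\<lambda>x. \<mu>) + integral\<^sup>L (sample_law n sf sa \<alpha> \<mu>) (\<lambda>x. (\<Sum>i<n. wfun \<alpha> \<mu> (x i)) / real n)"
        using i1 by (intro Bochner_Integration.integral_add P.integrable_const) auto
      also have "integral\<^sup>L (sample_law n sf sa \<alpha> \<mu>) (\<lambda>x. (\<Sum>i<n. wfun \<alpha> \<mu> (x i)) / real n) = 0"
        by (simp add: integral_sum S)
      finally show ?thesis unfolding eq using P.prob_space by simp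
    qed
  qed
  interpret P: prob_space "sample_law n sf sa \<alpha> \<mu>"
    unfolding sample_law_def by (intro prob_space_PiM obs_prob)
  note C = sample_cross[OF a, where \<mu>=\<mu> and sa=sa and n=n]
  have eq2: "(mu_cv n \<alpha> x - \<mu>)\<^sup>2 = (\<Sum>i<n. \<Sum>j<n. wfun \<alpha> \<mu> (x i) * wfun \<alpha> \<mu> (x j)) / (real n)\<^sup>2" for x
    unfolding mu_cv_eq[OF n, where \<mu>=\<mu>]
    by (simp add: power_divide power2_eq_square sum_product)
  have int: "integrable (sample_law n sf sa \<alpha> \<mu>) (\<lambda>x. (\<Sum>i<n. \<Sum>j<n. wfun \<alpha> \<mu> (x i) * wfun \<alpha> \<mu> (x j)) / (real n)\<^sup>2)"
  proof -
    have "integrable (sample_law n sf sa \<alpha> \<mu>) (\<lambda>x. (\<Sum>i<n. \<Sum>j<n. wfun \<alpha> \<mu> (x i) * wfun \<alpha> \<mu> (x j)))"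
      by (intro Bochner_Integration.integrable_sum) (simp add: C)
    then show ?thesis by (intro integrable_divide_zero)
  qed
  have "integral\<^sup>L (sample_law n sf sa \<alpha> \<mu>) (\<lambda>x. (\<Sum>i<n. \<Sum>j<n. wfun \<alpha> \<mu> (x i) * wfun \<alpha> \<mu> (x j)) / (real n)\<^sup>2)
      = (\<Sum>i<n. \<Sum>j<n. (if i = j then sf\<^sup>2 - \<alpha>\<^sup>2 + sa\<^sup>2 else 0)) / (real n)\<^sup>2"
  proof -
    have "integral\<^sup>L (sample_law n sf sa \<alpha> \<mu>) (\<lambda>x. (\<Sum>i<n. \<Sum>j<n. wfun \<alpha> \<mu> (x i) * wfun \<alpha> \<mu> (x j)))
      = (\<Sum>i<n. \<Sum>j<n. integral\<^sup>L (sample_law n sf sa \<alpha> \<mu>) (\<lambda>x. wfun \<alpha> \<mu> (x i) * wfun \<alpha> \<mu> (x j)))"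
      apply (subst Bochner_Integration.integral_sum)
       apply (rule Bochner_Integration.integrable_sum)
       apply (simp add: C)
      apply (rule sum.cong[OF refl])
      apply (subst Bochner_Integration.integral_sum)
       apply (simp add: C)
      apply simp
      done
    also have "\<dots> = (\<Sum>i<n. \<Sum>j<n. (if i = j then sf\<^sup>2 - \<alpha>\<^sup>2 + sa\<^sup>2 else 0))"
      by (intro sum.cong refl) (simp add: C)
    finally have X: "integral\<^sup>L (sample_law n sf sa \<alpha> \<mu>) (\<lambda>x. (\<Sum>i<n. \<Sum>j<n. wfun \<alpha> \<mu> (x i) * wfun \<alpha> \<mu> (x j)))
      = (\<Sum>i<n. \<Sum>j<n. (if i = j then sf\<^sup>2 - \<alpha>\<^sup>2 + sa\<^sup>2 else 0))" .
    show ?thesis by (subst integral_divide_zero) (rule arg_cong[where f="\<lambda>t. t / (real n)\<^sup>2", OF X])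
  qed
  also have "\<dots> = (sf\<^sup>2 - \<alpha>\<^sup>2 + sa\<^sup>2) / real n"
    using n by (simp add: power2_eq_square)
  finally have val: "integral\<^sup>L (sample_law n sf sa \<alpha> \<mu>) (\<lambda>x. (\<Sum>i<n. \<Sum>j<n. wfun \<alpha> \<mu> (x i) * wfun \<alpha> \<mu> (x j)) / (real n)\<^sup>2) = (sf\<^sup>2 - \<alpha>\<^sup>2 + sa\<^sup>2) / real n" .
  have "mse n sf sa \<alpha> \<mu> (mu_cv n \<alpha>) = (\<integral>\<^sup>+x. ennreal ((\<Sum>i<n. \<Sum>j<n. wfun \<alpha> \<mu> (x i) * wfun \<alpha> \<mu> (x j)) / (real n)\<^sup>2) \<partial>sample_law n sf sa \<alpha> \<mu>)"
    unfolding mse_def eq2 ..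
  also have "\<dots> = ennreal ((sf\<^sup>2 - \<alpha>\<^sup>2 + sa\<^sup>2) / real n)"
  proof (subst nn_integral_eq_integral[OF int])
    show "AE x in sample_law n sf sa \<alpha> \<mu>. 0 \<le> (\<Sum>i<n. \<Sum>j<n. wfun \<alpha> \<mu> (x i) * wfun \<alpha> \<mu> (x j)) / (real n)\<^sup>2"
      by (intro AE_I2) (simp add: sum_product[symmetric] power2_eq_square[symmetric])
  qed (simp only: val)
  finally show "mse n sf sa \<alpha> \<mu> (mu_cv n \<alpha>) = ennreal ((sf\<^sup>2 - \<alpha>\<^sup>2 + sa\<^sup>2) / real n)" .
qed


lemma exp_bound: "0 < (y::real) \<Longrightarrow> 1 - y \<le> y / (exp y - 1)"
proof -
  assume y: "0 < y"
  have e1: "exp y > 1" using y by simp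
  have "1 + (-y) \<le> exp (-y)" by (rule exp_ge_add_one_self)
  then have "(1 - y) * exp y \<le> exp (-y) * exp y" by (intro mult_right_mono) auto
  then have "(1 - y) * exp y \<le> 1" by (simp add: exp_minus field_simps)
  then have "(1 - y) * (exp y - 1) \<le> y" by (simp add: algebra_simps)
  then show ?thesis using e1 by (simp add: field_simps)
qed

lemma limit_arg:
  fixes v A :: real
  assumes v: "v > 0" and n: "n \<ge> 1"
    and H: "\<And>\<Delta>. \<Delta> > 0 \<Longrightarrow> \<Delta>\<^sup>2 / (exp (\<Delta>\<^sup>2 / v) ^ n - 1) \<le> A"
  shows "v / real n \<le> A"
proof -
  have c: "v / real n > 0" using v n by simp
  have B: "v / real n * (1 - y) \<le> A" if y: "y > 0" for y
  proof -
    define \<Delta> where "\<Delta> = sqrt (y * v / real n)"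
    have d: "\<Delta> > 0" unfolding \<Delta>_def using y v n by simp
    have d2: "\<Delta>\<^sup>2 = y * v / real n" unfolding \<Delta>_def using y v n by simp
    have e: "real n * (\<Delta>\<^sup>2 / v) = y" unfolding d2 using v n by simp
    have ex: "exp (\<Delta>\<^sup>2 / v) ^ n = exp y"
      using exp_of_nat_mult[of n "\<Delta>\<^sup>2 / v"] e by simp
    have "v / real n * (1 - y) \<le> v / real n * (y / (exp y - 1))"
      using exp_bound[OF y] c by (intro mult_left_mono) auto
    also have "\<dots> = \<Delta>\<^sup>2 / (exp (\<Delta>\<^sup>2 / v) ^ n - 1)" by (simp only: ex) (simp add: d2)
    also have "\<dots> \<le> A" using H[OF d] .
    finally show ?thesis .
  qed
  show ?thesis
  proof (rule ccontr)
    assume "\<not> v / real n \<le> A"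
    then have lt: "A < v / real n" by simp
    define y where "y = (v / real n - A) / (2 * (v / real n))"
    have y: "y > 0" unfolding y_def using lt c by (intro divide_pos_pos) auto
    have gen: "C * (1 - (C - A) / (2 * C)) = C - (C - A) / 2" if "C > 0" for C :: real
      using that by (simp add: field_simps)
    have "v / real n * (1 - y) = v / real n - (v / real n - A) / 2"
      unfolding y_def by (rule gen[OF c])
    then have "v / real n - (v / real n - A) / 2 \<le> A" using B[OF y] by simp
    moreover have "\<And>C::real. C - (C - A) / 2 \<le> A \<Longrightarrow> A < C \<Longrightarrow> False"
      by (simp add: field_simps)
    ultimately show False using lt by blast
  qed
qed


lemma sets_obs[measurable_cong]: "sets (obs_law sf sa \<alpha> \<mu>) = sets borel"
  by (simp add: obs_law_FF)

lemma sample_prob: "prob_space (sample_law n sf sa \<alpha> \<mu>)"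
  unfolding sample_law_def by (intro prob_space_PiM obs_prob)

lemma lr_pos: "0 < lr v \<alpha> \<mu> \<Delta> p" unfolding lr_def by simp

lemma lr_sq: "v \<noteq> 0 \<Longrightarrow> (lr v \<alpha> \<mu> \<Delta> p)\<^sup>2 = exp (\<Delta>\<^sup>2 / v) * lr v \<alpha> \<mu> (2 * \<Delta>) p"
  unfolding lr_def
  by (simp add: exp_add[symmetric] power2_eq_square exp_double[symmetric] field_simps)

lemma sample_tilt:
  assumes a: "\<bar>\<alpha>\<bar> \<le> sf" and v: "v = sf\<^sup>2 - \<alpha>\<^sup>2 + sa\<^sup>2" "v > 0"
  shows "sample_law n sf sa \<alpha> (\<mu> + \<Delta>) = density (sample_law n sf sa \<alpha> \<mu>) (\<lambda>x. ennreal (\<Prod>i<n. lr v \<alpha> \<mu> \<Delta> (x i)))"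
proof -
  have "sample_law n sf sa \<alpha> (\<mu> + \<Delta>) = PiM {..<n} (\<lambda>_. density (obs_law sf sa \<alpha> \<mu>) (\<lambda>p. ennreal (lr v \<alpha> \<mu> \<Delta> p)))"
    unfolding sample_law_def obs_tilt[OF a v] ..
  also have "\<dots> = density (PiM {..<n} (\<lambda>_. obs_law sf sa \<alpha> \<mu>)) (\<lambda>x. \<Prod>i\<in>{..<n}. ennreal (lr v \<alpha> \<mu> \<Delta> (x i)))"
    by (rule PiM_density_prob) (auto simp: obs_prob obs_tilt[OF a v, symmetric])
  also have "\<dots> = density (sample_law n sf sa \<alpha> \<mu>) (\<lambda>x. ennreal (\<Prod>i<n. lr v \<alpha> \<mu> \<Delta> (x i)))"
    unfolding sample_law_def by (simp add: prod_ennreal lr_pos less_imp_le)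
  finally show ?thesis .
qed


lemma LR_meas:
  "(\<lambda>x. \<Prod>i<n. lr v \<alpha> \<mu>' \<Delta> (x i)) \<in> borel_measurable (sample_law n sf sa \<alpha> \<mu>)"
proof -
  have c: "(\<lambda>x. lr v \<alpha> \<mu>' \<Delta> (x i)) \<in> borel_measurable (sample_law n sf sa \<alpha> \<mu>)" if "i \<in> {..<n}" for i
  proof -
    have m1: "(\<lambda>x. x i) \<in> measurable (sample_law n sf sa \<alpha> \<mu>) (obs_law sf sa \<alpha> \<mu>)"
      unfolding sample_law_def using that by (intro measurable_component_singleton) simp
    have m2: "lr v \<alpha> \<mu>' \<Delta> \<in> borel_measurable (obs_law sf sa \<alpha> \<mu>)"
      unfolding measurable_cong_sets[OF sets_obs refl] by (rule lr_meas)
    show ?thesis using measurable_compose[OF m1 m2] by simp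
  qed
  show ?thesis by (intro borel_measurable_prod c) 
qed

lemma T_meas:
  fixes T :: "(nat \<Rightarrow> real \<times> real) \<Rightarrow> real"
  assumes "T \<in> borel_measurable (PiM {..<n} (\<lambda>_. (borel :: (real \<times> real) measure)))"
  shows "T \<in> borel_measurable (sample_law n sf sa \<alpha> \<mu>)"
proof -
  have S: "sets (sample_law n sf sa \<alpha> \<mu>) = sets (PiM {..<n} (\<lambda>_. (borel :: (real \<times> real) measure)))"
    unfolding sample_law_def by (rule sets_PiM_cong) (simp_all add: sets_obs)
  have eq: "(borel_measurable (sample_law n sf sa \<alpha> \<mu>) :: (_ \<Rightarrow> real) set) = borel_measurable (PiM {..<n} (\<lambda>_. (borel :: (real \<times> real) measure)))"
    by (rule measurable_cong_sets[OF S]) simp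
  show ?thesis unfolding eq by (rule assms)
qed

theorem lemma2:
  fixes sf sa \<alpha> :: real and n :: nat
  assumes "sf > 0" and "sa \<ge> 0" and "\<bar>\<alpha>\<bar> \<le> sf" and "n \<ge> 1"
  shows "unbiased n sf sa \<alpha> (mu_cv n \<alpha>) \<and>
         (\<forall>T. unbiased n sf sa \<alpha> T \<longrightarrow>
              (\<forall>\<mu>. mse n sf sa \<alpha> \<mu> (mu_cv n \<alpha>) \<le> mse n sf sa \<alpha> \<mu> T))"
proof (intro conjI allI impI)
  note a = assms(3) and n = assms(4)
  show "unbiased n sf sa \<alpha> (mu_cv n \<alpha>)" by (rule cv_stats(1)[OF a n])
  fix T \<mu> assume U: "unbiased n sf sa \<alpha> T"
  define v where "v = sf\<^sup>2 - \<alpha>\<^sup>2 + sa\<^sup>2"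
  have cv: "mse n sf sa \<alpha> \<mu> (mu_cv n \<alpha>) = ennreal (v / real n)"
    unfolding v_def by (rule cv_stats(2)[OF a n])
  show "mse n sf sa \<alpha> \<mu> (mu_cv n \<alpha>) \<le> mse n sf sa \<alpha> \<mu> T"
  proof (cases "v > 0")
    case False
    then have "v / real n \<le> 0" by (simp add: divide_nonpos_nonneg)
    then show ?thesis unfolding cv ennreal_neg[OF \<open>v / real n \<le> 0\<close>] by simp
  next
    case vpos: True
    show ?thesis
    proof (cases "mse n sf sa \<alpha> \<mu> T = \<infinity>")
      case True then show ?thesis by simp
    next
      case fin: False
      let ?P = "sample_law n sf sa \<alpha> \<mu>"
      interpret P: prob_space ?P by (rule sample_prob)
      have Tm[measurable]: "T \<in> borel_measurable ?P" using U unfolding unbiased_def by (intro T_meas) simp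
      have iX: "integrable ?P (\<lambda>x. (T x - \<mu>)\<^sup>2)"
        using fin unfolding mse_def by (simp add: integrable_iff_bounded less_top)
      define A where "A = integral\<^sup>L ?P (\<lambda>x. (T x - \<mu>)\<^sup>2)"
      have mT: "mse n sf sa \<alpha> \<mu> T = ennreal A"
        unfolding mse_def A_def by (rule nn_integral_eq_integral[OF iX]) simp
      have H: "\<Delta>\<^sup>2 / (exp (\<Delta>\<^sup>2 / v) ^ n - 1) \<le> A" if d: "\<Delta> > 0" for \<Delta>
        unfolding A_def
      proof (rule hcr[where La = "\<lambda>x. \<Prod>i<n. lr v \<alpha> \<mu> \<Delta> (x i)" and Lb = "\<lambda>x. \<Prod>i<n. lr v \<alpha> \<mu> (2 * \<Delta>) (x i)"])
        show "prob_space ?P" by (rule sample_prob)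
        show "T \<in> borel_measurable ?P" by (rule Tm)
        show "(\<lambda>x. \<Prod>i<n. lr v \<alpha> \<mu> \<Delta> (x i)) \<in> borel_measurable ?P" by (rule LR_meas)
        show "(\<lambda>x. \<Prod>i<n. lr v \<alpha> \<mu> (2 * \<Delta>) (x i)) \<in> borel_measurable ?P" by (rule LR_meas)
        show "0 \<le> (\<Prod>i<n. lr v \<alpha> \<mu> \<Delta> (x i))" for x by (simp add: prod_nonneg lr_pos less_imp_le)
        show "0 \<le> (\<Prod>i<n. lr v \<alpha> \<mu> (2 * \<Delta>) (x i))" for x by (simp add: prod_nonneg lr_pos less_imp_le)
        show "integrable ?P T" using U unfolding unbiased_def by simp
        show "integral\<^sup>L ?P T = \<mu>" using U unfolding unbiased_def by simp
        have t1: "sample_law n sf sa \<alpha> (\<mu> + \<Delta>) = density ?P (\<lambda>x. ennreal (\<Prod>i<n. lr v \<alpha> \<mu> \<Delta> (x i)))"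
          by (rule sample_tilt[OF a v_def vpos])
        have t2: "sample_law n sf sa \<alpha> (\<mu> + 2 * \<Delta>) = density ?P (\<lambda>x. ennreal (\<Prod>i<n. lr v \<alpha> \<mu> (2 * \<Delta>) (x i)))"
          by (rule sample_tilt[OF a v_def vpos])
        show "integrable (density ?P (\<lambda>x. ennreal (\<Prod>i<n. lr v \<alpha> \<mu> \<Delta> (x i)))) T"
          using U unfolding unbiased_def t1[symmetric] by simp
        show "integral\<^sup>L (density ?P (\<lambda>x. ennreal (\<Prod>i<n. lr v \<alpha> \<mu> \<Delta> (x i)))) T = \<mu> + \<Delta>"
          using U unfolding unbiased_def t1[symmetric] by simp
        show "prob_space (density ?P (\<lambda>x. ennreal (\<Prod>i<n. lr v \<alpha> \<mu> \<Delta> (x i))))"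
          unfolding t1[symmetric] by (rule sample_prob)
        show "prob_space (density ?P (\<lambda>x. ennreal (\<Prod>i<n. lr v \<alpha> \<mu> (2 * \<Delta>) (x i))))"
          unfolding t2[symmetric] by (rule sample_prob)
        show "(\<Prod>i<n. lr v \<alpha> \<mu> \<Delta> (x i))\<^sup>2 = exp (\<Delta>\<^sup>2 / v) ^ n * (\<Prod>i<n. lr v \<alpha> \<mu> (2 * \<Delta>) (x i))" for x
        proof -
          have "(\<Prod>i<n. lr v \<alpha> \<mu> \<Delta> (x i))\<^sup>2 = (\<Prod>i<n. (lr v \<alpha> \<mu> \<Delta> (x i))\<^sup>2)"
            by (simp add: prod_power_distrib)
          also have "\<dots> = (\<Prod>i<n. exp (\<Delta>\<^sup>2 / v) * lr v \<alpha> \<mu> (2 * \<Delta>) (x i))"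
            using vpos by (simp add: lr_sq)
          also have "\<dots> = exp (\<Delta>\<^sup>2 / v) ^ n * (\<Prod>i<n. lr v \<alpha> \<mu> (2 * \<Delta>) (x i))"
            by (simp add: prod.distrib)
          finally show ?thesis .
        qed
        have "exp (\<Delta>\<^sup>2 / v) > 1" using d vpos by simp
        then show "exp (\<Delta>\<^sup>2 / v) ^ n > 1" using n by (intro one_less_power) auto
        show "integrable ?P (\<lambda>x. (T x - \<mu>)\<^sup>2)" by (rule iX)
      qed
      have "v / real n \<le> A" by (rule limit_arg[OF vpos n H])
      then show ?thesis unfolding cv mT by (simp add: ennreal_leI)
    qed
  qed
qed

end
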